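(* Let $K \ge 2$ be an integer and let $\tilde{\mathbf A} \in \mathbb{R}^{2K^2 \times K^2}$ be the real lifted shear operator defined in the context. Let $\tilde{\mathbf B} \in \mathbb{R}^{K^2 \times 2K^2}$, $\tilde{\boldsymbol\gamma} \in \mathbb{R}^{2K^2}$, $\tau > 0$, and let $D : \mathbb{R}^{K^2} \to \mathbb{R}^{K^2}$ be a map (the denoiser). Set $\mathbb V := (\ker \tilde{\mathbf B}\tilde{\mathbf A})^\perp \subset \mathbb{R}^{K^2}$. Define the forward operator $F_{\tilde{\boldsymbol\gamma}}(\boldsymbol\kappa',\tau) := \boldsymbol\kappa' + \tau \tilde{\mathbf B}(\tilde{\boldsymbol\gamma} - \tilde{\mathbf A}\boldsymbol\kappa')$ for $\boldsymbol\kappa' \in \mathbb{R}^{K^2}$, and the operator $T_{\tilde{\boldsymbol\gamma}}(\cdot,\tau) := D \circ F_{\tilde{\boldsymbol\gamma}}(\cdot,\tau)$. Assume: (i) $D$ maps $\mathbb V$ into $\mathbb V$; (ii) $D$ is non-expansive on $\mathbb V$, i.e. $\|D(\mathbf x) - D(\mathbf y)\| \le \beta \|\mathbf x - \mathbf y\|$ for all $\mathbf x, \mathbf y \in \mathbb V$ for some $\beta \le 1$; (iii) $\tilde{\mathbf B}\tilde{\mathbf A}$ is symmetric positive semidefinite (and nonzero); (iv) $\operatorname{im} \tilde{\mathbf B} \subset \mathbb V$; (v) letting $\lambda_{\min}$ and $\lambda_{\max} = \|\tilde{\mathbf B}\tilde{\mathbf A}\|$ denote respectively the smallest and largest nonzero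 eigenvalues of $\tilde{\mathbf B}\tilde{\mathbf A}$, and $\rho^\star := \frac{\lambda_{\max} - \lambda_{\min}}{\lambda_{\max} + \lambda_{\min}}$, we have for some fixed $\rho \in [\rho^\star, 1)$ that $$\frac{1-\rho}{\lambda_{\min}} \le \tau \le \frac{1+\rho}{\lambda_{\max}}.$$ Then $T_{\tilde{\boldsymbol\gamma}}(\cdot,\tau)$ admits a unique fixed point $\hat{\boldsymbol\kappa} \in \mathbb V$. Moreover, for any $\boldsymbol\kappa^{(0)} \in \mathbb V$, the sequence defined by $\boldsymbol\kappa^{(k+1)} = T_{\tilde{\boldsymbol\gamma}}(\boldsymbol\kappa^{(k)},\tau)$ converges linearly to $\hat{\boldsymbol\kappa}$ with rate $\rho$, i.e. $\|\boldsymbol\kappa^{(k)} - \hat{\boldsymbol\kappa}\| \le \rho^k \|\boldsymbol\kappa^{(0)} - \hat{\boldsymbol\kappa}\|$ for all $k \in \mathbb N$.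
   Context: Vectors in $\mathbb{R}^{K^2}$ or $\mathbb{C}^{K^2}$ represent $K\times K$ images flattened, with pixel $(k_1,k_2)$, $0\le k_1,k_2\le K-1$, at index $Kk_1+k_2$. Let $\mathbf F \in \mathbb{C}^{K^2\times K^2}$ be the (unitary) 2D discrete Fourier transform and $\mathbf F^{H}$ its conjugate transpose. Let $\mathbf P$ be the diagonal matrix with $\mathbf P[0,0]=0$ and $\mathbf P[Kk_1+k_2, Kk_1+k_2] = \frac{(k_1 + i k_2)^2}{k_1^2+k_2^2}$ for $(k_1,k_2) \ne (0,0)$. Set $\mathbf A := \mathbf F^H \mathbf P \mathbf F \in \mathbb{C}^{K^2\times K^2}$ and $\tilde{\mathbf A} := \begin{pmatrix} \operatorname{Re}\mathbf A \\ \operatorname{Im}\mathbf A\end{pmatrix} \in \mathbb{R}^{2K^2\times K^2}$. Norms are Euclidean norms (operator norm for matrices). *)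

theory Defs
  imports "Jordan_Normal_Form.Schur_Decomposition" "Jordan_Normal_Form.Matrix_Kernel"
begin

text \<open>Vectors of R^(K^2) are JNF vectors of dimension K*K; pixel (k1,k2) sits at index K*k1+k2.\<close>

definition dft2 :: "nat \<Rightarrow> complex mat" where
  "dft2 K = mat (K*K) (K*K) (\<lambda>(i,j).
     complex_of_real (1 / real K) *
     cis (- 2 * pi * real ((i div K) * (j div K) + (i mod K) * (j mod K)) / real K))"

definition shear_mult :: "nat \<Rightarrow> complex mat" where
  "shear_mult K = mat (K*K) (K*K) (\<lambda>(i,j).
     if i = j \<and> i \<noteq> 0 then
       (let k1 = real (i div K); k2 = real (i mod K) in
        (Complex k1 k2)^2 / complex_of_real (k1^2 + k2^2))
     else 0)"

definition shear_op :: "nat \<Rightarrow> complex mat" where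
  "shear_op K = mat_adjoint (dft2 K) * shear_mult K * dft2 K"

definition lifted_shear_op :: "nat \<Rightarrow> real mat" where
  "lifted_shear_op K = mat (2*(K*K)) (K*K) (\<lambda>(i,j).
     if i < K*K then Re (shear_op K $$ (i,j)) else Im (shear_op K $$ (i - K*K, j)))"

definition enorm :: "real vec \<Rightarrow> real" where
  "enorm x = sqrt (x \<bullet> x)"

definition orth_compl :: "nat \<Rightarrow> real vec set \<Rightarrow> real vec set" where
  "orth_compl n W = {x \<in> carrier_vec n. \<forall>y\<in>W. x \<bullet> y = 0}"

end

theory Submission imports Defs "Jordan_Normal_Form.Spectral_Radius" "HOL-Analysis.Function_Topology" begin

lemma null_cmp: fixes f g :: "nat \<Rightarrow> real"
  assumes "\<And>k. \<bar>f k\<bar> \<le> g k" "g \<longlonglongrightarrow> 0" shows "f \<longlonglongrightarrow> 0"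
proof (rule tendsto_sandwich[of "\<lambda>k. - g k" f sequentially g])
  show "\<forall>\<^sub>F k in sequentially. - g k \<le> f k" using assms(1) by (intro always_eventually) (smt (verit))
  show "\<forall>\<^sub>F k in sequentially. f k \<le> g k" using assms(1) by (intro always_eventually) (smt (verit))
  show "(\<lambda>k. - g k) \<longlonglongrightarrow> 0" using tendsto_minus[OF assms(2)] by simp
qed (rule assms(2))


lemma dot_self_ge0: "0 \<le> (x::real vec) \<bullet> x"
  unfolding scalar_prod_def by (rule sum_nonneg) (rule zero_le_square)

lemma dot_self_eq0: assumes "x \<in> carrier_vec n" "(x::real vec) \<bullet> x = 0" shows "x = 0\<^sub>v n"
proof -
  have "\<forall>i\<in>{0..<n}. x $ i * x $ i = 0"
    using assms sum_nonneg_eq_0_iff[of "{0..<n}" "\<lambda>i. x $ i * x $ i"]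
    unfolding scalar_prod_def by auto
  then show ?thesis using assms by (intro eq_vecI) auto
qed

lemma enorm_ge0: "enorm x \<ge> 0" unfolding enorm_def by (simp add: dot_self_ge0)

lemma enorm_sq: "(enorm x)^2 = x \<bullet> x" unfolding enorm_def using dot_self_ge0 by simp

lemma coord_le_enorm: assumes "i < dim_vec (x::real vec)" shows "\<bar>x $ i\<bar> \<le> enorm x"
proof -
  have "x $ i * x $ i \<le> (\<Sum>j\<in>{0..<dim_vec x}. x $ j * x $ j)"
    by (rule member_le_sum) (use assms in auto)
  hence "(x $ i)^2 \<le> x \<bullet> x" unfolding scalar_prod_def by (simp add: power2_eq_square)
  hence "sqrt ((x $ i)^2) \<le> sqrt (x \<bullet> x)" by (rule real_sqrt_le_mono)
  thus ?thesis unfolding enorm_def by simp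
qed

lemma dot_expand: "(x::real vec) \<in> carrier_vec n \<Longrightarrow> y \<in> carrier_vec n \<Longrightarrow> x \<bullet> y = (\<Sum>i<n. x $ i * y $ i)"
  unfolding scalar_prod_def by (simp add: atLeast0LessThan)

lemma mv_expand: "(Q::real mat) \<in> carrier_mat n n \<Longrightarrow> z \<in> carrier_vec n \<Longrightarrow> i < n \<Longrightarrow>
   (Q *\<^sub>v z) $ i = (\<Sum>j<n. Q $$ (i,j) * z $ j)"
  by (simp add: scalar_prod_def atLeast0LessThan)

lemma max_exists:
  fixes Q :: "real mat"
  assumes Q: "Q \<in> carrier_mat n n" and Y: "Y \<subseteq> carrier_vec n"
    and x0: "x0 \<in> orth_compl n Y" "x0 \<bullet> x0 = 1"
  shows "\<exists>x\<in>orth_compl n Y. x \<bullet> x = 1 \<and>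
     (\<forall>z\<in>orth_compl n Y. z \<bullet> z = 1 \<longrightarrow> (Q *\<^sub>v z) \<bullet> (Q *\<^sub>v z) \<le> (Q *\<^sub>v x) \<bullet> (Q *\<^sub>v x))"
proof -
  define X where "X = powertop_real {..<n}"
  define sq where "sq f = (\<Sum>i<n. f i * f i)" for f :: "nat \<Rightarrow> real"
  define lin where "lin y f = (\<Sum>i<n. f i * y $ i)" for y :: "real vec" and f :: "nat \<Rightarrow> real"
  define qf where "qf f = (\<Sum>i<n. (\<Sum>j<n. Q $$ (i,j) * f j) * (\<Sum>j<n. Q $$ (i,j) * f j))" for f :: "nat \<Rightarrow> real"
  define P where "P = PiE {..<n} (\<lambda>_. {-1..1::real})"
  define S1 where "S1 = {f \<in> topspace X. sq f \<in> {1}}"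
  define S2 where "S2 = \<Inter> (insert (topspace X) ((\<lambda>y. {f \<in> topspace X. lin y f \<in> {0}}) ` Y))"
  define S where "S = S1 \<inter> (S2 \<inter> P)"
  have cP: "compactin X P" unfolding X_def P_def by (simp add: compactin_PiE)
  have c1: "closedin X S1" unfolding S1_def X_def sq_def
    by (intro closedin_continuous_map_preimage) (auto intro!: continuous_intros)
  have c2: "closedin X S2" unfolding S2_def
  proof (intro closedin_Inter)
    fix T assume "T \<in> insert (topspace X) ((\<lambda>y. {f \<in> topspace X. lin y f \<in> {0}}) ` Y)"
    then show "closedin X T"
    proof
      assume "T = topspace X" thus ?thesis by simp
    next
      assume "T \<in> (\<lambda>y. {f \<in> topspace X. lin y f \<in> {0}}) ` Y"
      then obtain y where T: "T = {f \<in> topspace X. lin y f \<in> {0}}" by auto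
      have "closedin X {f \<in> topspace X. lin y f \<in> {0}}" unfolding X_def lin_def
        by (intro closedin_continuous_map_preimage) (auto intro!: continuous_intros)
      thus ?thesis using T by simp
    qed
  qed auto
  have cS: "compactin X S" unfolding S_def
    by (intro closed_Int_compactin c1 closed_Int_compactin c2 cP)
  have contq: "continuous_map X euclideanreal qf" unfolding X_def qf_def
    by (auto intro!: continuous_intros)
  have "compact (qf ` S)" using image_compactin[OF cS contq] by simp
  have tr: "f \<in> S" if z: "z \<in> orth_compl n Y" "z \<bullet> z = 1" and f: "f = restrict (\<lambda>i. z $ i) {..<n}" for z f
  proof -
    have zc: "z \<in> carrier_vec n" using z unfolding orth_compl_def by auto
    have fP: "f \<in> P" unfolding P_def f
    proof (intro PiE_I)
      fix i assume i: "i \<in> {..<n}"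
      have "\<bar>z $ i\<bar> \<le> enorm z" using coord_le_enorm[of i z] zc i by auto
      also have "enorm z = 1" unfolding enorm_def using z by simp
      finally show "restrict (\<lambda>i. z $ i) {..<n} i \<in> {-1..1}" using i by auto
    qed auto
    have fT: "f \<in> topspace X" unfolding X_def f by auto
    have "sq f = z \<bullet> z" unfolding sq_def dot_expand[OF zc zc] f by simp
    hence "f \<in> S1" unfolding S1_def using fT z by auto
    moreover have "f \<in> S2" unfolding S2_def
    proof (intro InterI)
      fix T assume "T \<in> insert (topspace X) ((\<lambda>y. {f \<in> topspace X. lin y f \<in> {0}}) ` Y)"
      then show "f \<in> T"
      proof
        assume "T = topspace X" thus ?thesis using fT by simp
      next
        assume "T \<in> (\<lambda>y. {f \<in> topspace X. lin y f \<in> {0}}) ` Y"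
        then obtain y where T: "T = {f \<in> topspace X. lin y f \<in> {0}}" and y: "y \<in> Y" by auto
        have yc: "y \<in> carrier_vec n" using y Y by auto
        have "lin y f = z \<bullet> y" unfolding lin_def dot_expand[OF zc yc] f by simp
        also have "\<dots> = 0" using z y unfolding orth_compl_def by auto
        finally show ?thesis using T fT by simp
      qed
    qed
    ultimately show ?thesis using fP unfolding S_def by auto
  qed
  have qtr: "qf (restrict (\<lambda>i. z $ i) {..<n}) = (Q *\<^sub>v z) \<bullet> (Q *\<^sub>v z)" if zc: "z \<in> carrier_vec n" for z
  proof -
    have Qz: "Q *\<^sub>v z \<in> carrier_vec n" using Q zc by auto
    show ?thesis unfolding dot_expand[OF Qz Qz] qf_def
      by (intro sum.cong refl) (simp add: mv_expand[OF Q zc])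
  qed
  have "S \<noteq> {}" using tr[OF x0 refl] by auto
  from compact_attains_sup[OF \<open>compact (qf ` S)\<close>] this
  obtain fm where fm: "fm \<in> S" and fmax: "\<forall>g\<in>S. qf g \<le> qf fm" by auto
  define x where "x = vec n fm"
  have xc: "x \<in> carrier_vec n" unfolding x_def by simp
  have fmr: "restrict (\<lambda>i. x $ i) {..<n} = fm"
  proof
    fix i show "restrict (\<lambda>i. x $ i) {..<n} i = fm i"
      using fm unfolding S_def P_def x_def by (auto simp: PiE_def extensional_def)
  qed
  have "sq fm = 1" using fm unfolding S_def S1_def by auto
  hence "x \<bullet> x = 1" unfolding sq_def x_def by (simp add: scalar_prod_def atLeast0LessThan)
  moreover have "x \<in> orth_compl n Y"
  proof -
    { fix y assume y: "y \<in> Y"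
      have yc: "y \<in> carrier_vec n" using y Y by auto
      have "fm \<in> {f \<in> topspace X. lin y f \<in> {0}}" using fm y unfolding S_def S2_def by blast
      hence "lin y fm = 0" by simp
      hence "x \<bullet> y = 0" unfolding lin_def x_def using yc by (simp add: scalar_prod_def atLeast0LessThan) }
    thus ?thesis unfolding orth_compl_def using xc by auto
  qed
  moreover have "\<forall>z\<in>orth_compl n Y. z \<bullet> z = 1 \<longrightarrow> (Q *\<^sub>v z) \<bullet> (Q *\<^sub>v z) \<le> (Q *\<^sub>v x) \<bullet> (Q *\<^sub>v x)"
  proof (intro ballI impI)
    fix z assume z: "z \<in> orth_compl n Y" "z \<bullet> z = 1"
    have zc: "z \<in> carrier_vec n" using z unfolding orth_compl_def by auto
    have "qf (restrict (\<lambda>i. z $ i) {..<n}) \<le> qf fm" using fmax tr[OF z refl] by auto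
    thus "(Q *\<^sub>v z) \<bullet> (Q *\<^sub>v z) \<le> (Q *\<^sub>v x) \<bullet> (Q *\<^sub>v x)"
      using qtr[OF zc] qtr[OF xc] fmr by simp
  qed
  ultimately show ?thesis by blast
qed

lemma W_carrier: "z \<in> orth_compl n Y \<Longrightarrow> z \<in> carrier_vec n"
  unfolding orth_compl_def by auto

lemma W_add: assumes Y: "Y \<subseteq> carrier_vec n" and z: "z \<in> orth_compl n Y" and w: "w \<in> orth_compl n Y"
  shows "z + w \<in> orth_compl n Y"
proof -
  have zc: "z \<in> carrier_vec n" and wc: "w \<in> carrier_vec n" using z w W_carrier by auto
  { fix y assume y: "y \<in> Y"
    hence yc: "y \<in> carrier_vec n" using Y by auto
    have "(z + w) \<bullet> y = z \<bullet> y + w \<bullet> y" using add_scalar_prod_distrib[OF zc wc yc] .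
    also have "\<dots> = 0" using z w y unfolding orth_compl_def by auto
    finally have "(z + w) \<bullet> y = 0" . }
  thus ?thesis using zc wc unfolding orth_compl_def by auto
qed

lemma W_minus: assumes Y: "Y \<subseteq> carrier_vec n" and z: "z \<in> orth_compl n Y" and w: "w \<in> orth_compl n Y"
  shows "z - w \<in> orth_compl n Y"
proof -
  have zc: "z \<in> carrier_vec n" and wc: "w \<in> carrier_vec n" using z w W_carrier by auto
  { fix y assume y: "y \<in> Y"
    hence yc: "y \<in> carrier_vec n" using Y by auto
    have "(z - w) \<bullet> y = z \<bullet> y - w \<bullet> y" using minus_scalar_prod_distrib[OF zc wc yc] .
    also have "\<dots> = 0" using z w y unfolding orth_compl_def by auto
    finally have "(z - w) \<bullet> y = 0" . }
  thus ?thesis using zc wc unfolding orth_compl_def by auto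
qed

lemma W_smult: assumes Y: "Y \<subseteq> carrier_vec n" and z: "z \<in> orth_compl n Y"
  shows "(c::real) \<cdot>\<^sub>v z \<in> orth_compl n Y"
proof -
  have zc: "z \<in> carrier_vec n" using z W_carrier by auto
  { fix y assume y: "y \<in> Y"
    hence yc: "y \<in> carrier_vec n" using Y by auto
    have "(c \<cdot>\<^sub>v z) \<bullet> y = c * (z \<bullet> y)" using smult_scalar_prod_distrib[OF zc yc] .
    also have "\<dots> = 0" using z y unfolding orth_compl_def by auto
    finally have "(c \<cdot>\<^sub>v z) \<bullet> y = 0" . }
  thus ?thesis using zc unfolding orth_compl_def by auto
qed

lemma quad_zero: assumes "\<forall>t::real. t * p + t^2 * q \<le> 0" shows "p = 0"
proof -
  define d where "d = \<bar>q\<bar> + 1"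
  have d: "d > 0" "d + q \<ge> 1" unfolding d_def by auto
  have "(p/d) * p + (p/d)^2 * q \<le> 0" using spec[OF assms, of "p/d"] .
  moreover have "(p/d) * p + (p/d)^2 * q = p^2 * (d + q) / d^2"
    using d by (simp add: field_simps power2_eq_square)
  ultimately have "p^2 * (d + q) / d^2 \<le> 0" by simp
  hence "p^2 * (d + q) \<le> 0" using d by (simp add: divide_le_0_iff)
  hence "p^2 \<le> 0" using d by (smt (verit) mult_nonneg_nonneg zero_le_power2 mult_le_cancel_left1)
  thus ?thesis by simp
qed

lemma dot_sq_expand: assumes "u \<in> carrier_vec n" "v \<in> carrier_vec n"
  shows "(u + (t::real) \<cdot>\<^sub>v v) \<bullet> (u + t \<cdot>\<^sub>v v) = u \<bullet> u + 2 * t * (u \<bullet> v) + t^2 * (v \<bullet> v)"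
proof -
  have "(u + t \<cdot>\<^sub>v v) \<bullet> (u + t \<cdot>\<^sub>v v) = (\<Sum>i<n. (u $ i + t * v $ i) * (u $ i + t * v $ i))"
    using assms by (simp add: scalar_prod_def atLeast0LessThan)
  also have "\<dots> = (\<Sum>i<n. u $ i * u $ i + 2 * t * (u $ i * v $ i) + t^2 * (v $ i * v $ i))"
    by (intro sum.cong refl) (simp add: algebra_simps power2_eq_square)
  also have "\<dots> = u \<bullet> u + 2 * t * (u \<bullet> v) + t^2 * (v \<bullet> v)"
    using assms by (simp add: dot_expand[OF assms(1) assms(1)] dot_expand[OF assms(1) assms(2)]
        dot_expand[OF assms(2) assms(2)] sum.distrib sum_distrib_left)
  finally show ?thesis .
qed

lemma sym_dot: assumes Q: "(Q::real mat) \<in> carrier_mat n n" and s: "transpose_mat Q = Q"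
  and u: "u \<in> carrier_vec n" and w: "w \<in> carrier_vec n"
  shows "(Q *\<^sub>v u) \<bullet> w = u \<bullet> (Q *\<^sub>v w)"
  using transpose_vec_mult_scalar[OF Q w u] s by simp

lemma bound_from_max:
  fixes Q :: "real mat"
  assumes Q: "Q \<in> carrier_mat n n" and Y: "Y \<subseteq> carrier_vec n"
    and mx: "\<forall>z\<in>orth_compl n Y. z \<bullet> z = 1 \<longrightarrow> (Q *\<^sub>v z) \<bullet> (Q *\<^sub>v z) \<le> \<nu>"
    and z: "z \<in> orth_compl n Y"
  shows "(Q *\<^sub>v z) \<bullet> (Q *\<^sub>v z) \<le> \<nu> * (z \<bullet> z)"
proof (cases "z \<bullet> z = 0")
  case True
  have zc: "z \<in> carrier_vec n" using z W_carrier by auto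
  hence "z = 0\<^sub>v n" using dot_self_eq0 True by auto
  moreover have "Q *\<^sub>v 0\<^sub>v n = 0\<^sub>v n" by (intro eq_vecI) (use Q in auto)
  ultimately show ?thesis using Q True by simp
next
  case False
  have zc: "z \<in> carrier_vec n" using z W_carrier by auto
  have pos: "z \<bullet> z > 0" using False dot_self_ge0[of z] by linarith
  define c where "c = 1 / sqrt (z \<bullet> z)"
  have c2: "c^2 = 1 / (z \<bullet> z)" unfolding c_def using pos by (simp add: power_divide)
  have w: "c \<cdot>\<^sub>v z \<in> orth_compl n Y" using W_smult[OF Y z] .
  have "(c \<cdot>\<^sub>v z) \<bullet> (c \<cdot>\<^sub>v z) = c^2 * (z \<bullet> z)" using zc by (simp add: power2_eq_square)
  also have "\<dots> = 1" using c2 pos by simp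
  finally have "(Q *\<^sub>v (c \<cdot>\<^sub>v z)) \<bullet> (Q *\<^sub>v (c \<cdot>\<^sub>v z)) \<le> \<nu>" using mx w by auto
  moreover have "(Q *\<^sub>v (c \<cdot>\<^sub>v z)) \<bullet> (Q *\<^sub>v (c \<cdot>\<^sub>v z)) = c^2 * ((Q *\<^sub>v z) \<bullet> (Q *\<^sub>v z))"
    using Q zc by (simp add: mult_mat_vec[OF Q zc] power2_eq_square)
  ultimately have "(Q *\<^sub>v z) \<bullet> (Q *\<^sub>v z) / (z \<bullet> z) \<le> \<nu>" using c2 by simp
  thus ?thesis using pos by (simp add: divide_le_eq mult.commute)
qed

lemma lagrange:
  fixes Q :: "real mat"
  assumes Q: "Q \<in> carrier_mat n n" and s: "transpose_mat Q = Q" and Y: "Y \<subseteq> carrier_vec n"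
    and QW: "\<forall>z\<in>orth_compl n Y. Q *\<^sub>v z \<in> orth_compl n Y"
    and x: "x \<in> orth_compl n Y" "x \<bullet> x = 1"
    and mx: "\<forall>z\<in>orth_compl n Y. z \<bullet> z = 1 \<longrightarrow> (Q *\<^sub>v z) \<bullet> (Q *\<^sub>v z) \<le> (Q *\<^sub>v x) \<bullet> (Q *\<^sub>v x)"
  shows "Q *\<^sub>v (Q *\<^sub>v x) = ((Q *\<^sub>v x) \<bullet> (Q *\<^sub>v x)) \<cdot>\<^sub>v x"
proof -
  define \<nu> where "\<nu> = (Q *\<^sub>v x) \<bullet> (Q *\<^sub>v x)"
  define a where "a = Q *\<^sub>v x"
  have xc: "x \<in> carrier_vec n" using x W_carrier by auto
  have ac: "a \<in> carrier_vec n" unfolding a_def using Q xc by auto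
  have aW: "a \<in> orth_compl n Y" unfolding a_def using QW x by auto
  have bnd: "(Q *\<^sub>v z) \<bullet> (Q *\<^sub>v z) \<le> \<nu> * (z \<bullet> z)" if "z \<in> orth_compl n Y" for z
    using bound_from_max[OF Q Y _ that, of \<nu>] mx unfolding \<nu>_def by auto
  have key: "a \<bullet> (Q *\<^sub>v y) = \<nu> * (x \<bullet> y)" if y: "y \<in> orth_compl n Y" for y
  proof -
    define b where "b = Q *\<^sub>v y"
    have yc: "y \<in> carrier_vec n" using y W_carrier by auto
    have bc: "b \<in> carrier_vec n" unfolding b_def using Q yc by auto
    have "\<forall>t. t * (2 * (a \<bullet> b - \<nu> * (x \<bullet> y))) + t^2 * (b \<bullet> b - \<nu> * (y \<bullet> y)) \<le> 0"
    proof
      fix t :: real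
      have zW: "x + t \<cdot>\<^sub>v y \<in> orth_compl n Y" using W_add[OF Y x(1) W_smult[OF Y y]] .
      have Qz: "Q *\<^sub>v (x + t \<cdot>\<^sub>v y) = a + t \<cdot>\<^sub>v b"
        unfolding a_def b_def using Q xc yc by (simp add: mult_add_distrib_mat_vec mult_mat_vec)
      have h: "(a + t \<cdot>\<^sub>v b) \<bullet> (a + t \<cdot>\<^sub>v b) \<le> \<nu> * ((x + t \<cdot>\<^sub>v y) \<bullet> (x + t \<cdot>\<^sub>v y))"
        using bnd[OF zW] unfolding Qz .
      have e1: "(a + t \<cdot>\<^sub>v b) \<bullet> (a + t \<cdot>\<^sub>v b) = \<nu> + 2 * t * (a \<bullet> b) + t^2 * (b \<bullet> b)"
        using dot_sq_expand[OF ac bc] unfolding \<nu>_def a_def by simp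
      have e2: "(x + t \<cdot>\<^sub>v y) \<bullet> (x + t \<cdot>\<^sub>v y) = 1 + 2 * t * (x \<bullet> y) + t^2 * (y \<bullet> y)"
        using dot_sq_expand[OF xc yc] x by simp
      from h[unfolded e1 e2]
      show "t * (2 * (a \<bullet> b - \<nu> * (x \<bullet> y))) + t^2 * (b \<bullet> b - \<nu> * (y \<bullet> y)) \<le> 0"
        by (simp add: algebra_simps)
    qed
    from quad_zero[OF this] show ?thesis unfolding b_def by simp
  qed
  define r where "r = Q *\<^sub>v a - \<nu> \<cdot>\<^sub>v x"
  have rW: "r \<in> orth_compl n Y" unfolding r_def using W_minus[OF Y _ W_smult[OF Y x(1)]] QW aW by auto
  have rc: "r \<in> carrier_vec n" using rW W_carrier by auto
  have Qac: "Q *\<^sub>v a \<in> carrier_vec n" using Q ac by auto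
  have "r \<bullet> r = (Q *\<^sub>v a) \<bullet> r - (\<nu> \<cdot>\<^sub>v x) \<bullet> r" unfolding r_def
    by (rule minus_scalar_prod_distrib[OF Qac _ rc[unfolded r_def]]) (use xc in auto)
  also have "(Q *\<^sub>v a) \<bullet> r = a \<bullet> (Q *\<^sub>v r)" by (rule sym_dot[OF Q s ac rc])
  also have "\<dots> = \<nu> * (x \<bullet> r)" by (rule key[OF rW])
  also have "(\<nu> \<cdot>\<^sub>v x) \<bullet> r = \<nu> * (x \<bullet> r)" using xc rc by simp
  finally have "r \<bullet> r = 0" by simp
  hence r0: "r = 0\<^sub>v n" using dot_self_eq0[OF rc] by auto
  show ?thesis
  proof (intro eq_vecI)
    fix i assume i: "i < dim_vec (((Q *\<^sub>v x) \<bullet> (Q *\<^sub>v x)) \<cdot>\<^sub>v x)"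
    hence i': "i < n" using xc by simp
    have "r $ i = 0" using r0 i' by simp
    hence "(Q *\<^sub>v a) $ i - \<nu> * x $ i = 0" unfolding r_def using i' xc Q ac by simp
    thus "(Q *\<^sub>v (Q *\<^sub>v x)) $ i = (((Q *\<^sub>v x) \<bullet> (Q *\<^sub>v x)) \<cdot>\<^sub>v x) $ i"
      using i' xc unfolding a_def \<nu>_def by simp
  qed (use Q xc in simp)
qed

lemma eigen_from:
  fixes Q :: "real mat"
  assumes Q: "Q \<in> carrier_mat n n" and Y: "Y \<subseteq> carrier_vec n"
    and QW: "\<forall>z\<in>orth_compl n Y. Q *\<^sub>v z \<in> orth_compl n Y"
    and x: "x \<in> orth_compl n Y" "x \<noteq> 0\<^sub>v n"
    and eq: "Q *\<^sub>v (Q *\<^sub>v x) = \<nu> \<cdot>\<^sub>v x" and nu: "\<nu> \<ge> 0"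
  shows "\<exists>\<sigma> y. \<sigma>^2 = \<nu> \<and> y \<in> orth_compl n Y \<and> y \<noteq> 0\<^sub>v n \<and> Q *\<^sub>v y = \<sigma> \<cdot>\<^sub>v y"
proof -
  define s where "s = sqrt \<nu>"
  have ss: "s * s = \<nu>" unfolding s_def using nu by simp
  define u where "u = Q *\<^sub>v x"
  have xc: "x \<in> carrier_vec n" using x W_carrier by auto
  have uc: "u \<in> carrier_vec n" unfolding u_def using Q xc by auto
  have uW: "u \<in> orth_compl n Y" unfolding u_def using QW x by auto
  have Qu: "(Q *\<^sub>v u) $ i = \<nu> * x $ i" if "i < n" for i
    using arg_cong[OF eq[folded u_def], of "\<lambda>v. v $ i"] that xc by simp
  have Qx: "(Q *\<^sub>v x) $ i = u $ i" for i unfolding u_def by simp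
  define wp where "wp = u + s \<cdot>\<^sub>v x"
  define wm where "wm = u - s \<cdot>\<^sub>v x"
  have wpW: "wp \<in> orth_compl n Y" unfolding wp_def by (rule W_add[OF Y uW W_smult[OF Y x(1)]])
  have wmW: "wm \<in> orth_compl n Y" unfolding wm_def by (rule W_minus[OF Y uW W_smult[OF Y x(1)]])
  have Qwp: "Q *\<^sub>v wp = s \<cdot>\<^sub>v wp"
  proof -
    have "Q *\<^sub>v wp = Q *\<^sub>v u + s \<cdot>\<^sub>v (Q *\<^sub>v x)" unfolding wp_def
      using Q uc xc by (simp add: mult_add_distrib_mat_vec mult_mat_vec)
    also have "\<dots> = s \<cdot>\<^sub>v wp"
    proof (intro eq_vecI)
      fix i assume "i < dim_vec (s \<cdot>\<^sub>v wp)"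
      hence i: "i < n" unfolding wp_def using uc xc by simp
      show "(Q *\<^sub>v u + s \<cdot>\<^sub>v (Q *\<^sub>v x)) $ i = (s \<cdot>\<^sub>v wp) $ i"
        using i Q uc xc Qu[OF i] ss unfolding wp_def u_def[symmetric] by (simp add: algebra_simps)
    qed (use Q uc xc in \<open>simp add: wp_def\<close>)
    finally show ?thesis .
  qed
  have Qwm: "Q *\<^sub>v wm = (-s) \<cdot>\<^sub>v wm"
  proof -
    have "Q *\<^sub>v wm = Q *\<^sub>v u - s \<cdot>\<^sub>v (Q *\<^sub>v x)" unfolding wm_def
      using Q uc xc by (simp add: mult_minus_distrib_mat_vec mult_mat_vec)
    also have "\<dots> = (-s) \<cdot>\<^sub>v wm"
    proof (intro eq_vecI)
      fix i assume "i < dim_vec ((-s) \<cdot>\<^sub>v wm)"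
      hence i: "i < n" unfolding wm_def using uc xc by simp
      show "(Q *\<^sub>v u - s \<cdot>\<^sub>v (Q *\<^sub>v x)) $ i = ((-s) \<cdot>\<^sub>v wm) $ i"
        using i Q uc xc Qu[OF i] ss unfolding wm_def u_def[symmetric] by (simp add: algebra_simps)
    qed (use Q uc xc in \<open>simp add: wm_def\<close>)
    finally show ?thesis .
  qed
  show ?thesis
  proof (cases "wp \<noteq> 0\<^sub>v n")
    case True
    thus ?thesis using wpW Qwp ss by (intro exI[of _ s] exI[of _ wp]) (simp add: power2_eq_square)
  next
    case F1: False
    show ?thesis
    proof (cases "wm \<noteq> 0\<^sub>v n")
      case True
      thus ?thesis using wmW Qwm ss by (intro exI[of _ "-s"] exI[of _ wm]) (simp add: power2_eq_square)
    next
      case False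
      have c: "u $ i + s * x $ i = 0 \<and> u $ i - s * x $ i = 0" if i: "i < n" for i
        using arg_cong[OF F1[simplified], of "\<lambda>v. v $ i"] arg_cong[OF False[simplified], of "\<lambda>v. v $ i"]
          i uc xc unfolding wp_def wm_def by simp
      obtain j where j: "j < n" "x $ j \<noteq> 0"
        using x(2) xc by (metis eq_vecI carrier_vecD index_zero_vec(1) index_zero_vec(2))
      have "s = 0" using c[OF j(1)] j(2) by auto
      hence s0: "\<nu> = 0" using ss by simp
      have "u = 0\<^sub>v n" by (intro eq_vecI) (use c \<open>s = 0\<close> uc in auto)
      hence "Q *\<^sub>v x = 0 \<cdot>\<^sub>v x" unfolding u_def by (intro eq_vecI) (use xc in auto)
      thus ?thesis using x s0 by (intro exI[of _ 0] exI[of _ x]) simp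
    qed
  qed
qed

lemma core:
  fixes Q :: "real mat"
  assumes Q: "Q \<in> carrier_mat n n" and s: "transpose_mat Q = Q" and Y: "Y \<subseteq> carrier_vec n"
    and QW: "\<forall>z\<in>orth_compl n Y. Q *\<^sub>v z \<in> orth_compl n Y"
    and x0: "x0 \<in> orth_compl n Y" "x0 \<noteq> 0\<^sub>v n"
  shows "\<exists>\<sigma> y. y \<in> orth_compl n Y \<and> y \<noteq> 0\<^sub>v n \<and> Q *\<^sub>v y = \<sigma> \<cdot>\<^sub>v y \<and>
     (\<forall>z\<in>orth_compl n Y. (Q *\<^sub>v z) \<bullet> (Q *\<^sub>v z) \<le> \<sigma>^2 * (z \<bullet> z))"
proof -
  have x0c: "x0 \<in> carrier_vec n" using x0 W_carrier by auto
  have pos: "x0 \<bullet> x0 > 0" using dot_self_ge0[of x0] dot_self_eq0[OF x0c] x0(2)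
    by fastforce
  define c where "c = 1 / sqrt (x0 \<bullet> x0)"
  have c2: "c^2 = 1 / (x0 \<bullet> x0)" unfolding c_def using pos by (simp add: power_divide)
  have x1W: "c \<cdot>\<^sub>v x0 \<in> orth_compl n Y" using W_smult[OF Y x0(1)] .
  have "(c \<cdot>\<^sub>v x0) \<bullet> (c \<cdot>\<^sub>v x0) = c^2 * (x0 \<bullet> x0)" using x0c by (simp add: power2_eq_square)
  also have "\<dots> = 1" using c2 pos by simp
  finally have x1: "(c \<cdot>\<^sub>v x0) \<bullet> (c \<cdot>\<^sub>v x0) = 1" .
  from max_exists[OF Q Y x1W x1] obtain x where x: "x \<in> orth_compl n Y" "x \<bullet> x = 1"
    and mx: "\<forall>z\<in>orth_compl n Y. z \<bullet> z = 1 \<longrightarrow> (Q *\<^sub>v z) \<bullet> (Q *\<^sub>v z) \<le> (Q *\<^sub>v x) \<bullet> (Q *\<^sub>v x)"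
    by blast
  have lg: "Q *\<^sub>v (Q *\<^sub>v x) = ((Q *\<^sub>v x) \<bullet> (Q *\<^sub>v x)) \<cdot>\<^sub>v x" by (rule lagrange[OF Q s Y QW x mx])
  have xc: "x \<in> carrier_vec n" using x W_carrier by auto
  have xn0: "x \<noteq> 0\<^sub>v n" using x(2) by auto
  from eigen_from[OF Q Y QW x(1) xn0 lg dot_self_ge0]
  obtain \<sigma> y where sy: "\<sigma>^2 = (Q *\<^sub>v x) \<bullet> (Q *\<^sub>v x)" "y \<in> orth_compl n Y" "y \<noteq> 0\<^sub>v n" "Q *\<^sub>v y = \<sigma> \<cdot>\<^sub>v y"
    by blast
  have "\<forall>z\<in>orth_compl n Y. (Q *\<^sub>v z) \<bullet> (Q *\<^sub>v z) \<le> \<sigma>^2 * (z \<bullet> z)"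
    using bound_from_max[OF Q Y, of "(Q *\<^sub>v x) \<bullet> (Q *\<^sub>v x)"] mx sy(1) by auto
  thus ?thesis using sy by blast
qed

lemma coord_tendsto:
  assumes "\<And>k. v k \<in> carrier_vec n" "w \<in> carrier_vec n" "(\<lambda>k. enorm (v k - w)) \<longlonglongrightarrow> 0" "i < n"
  shows "(\<lambda>k. v k $ i) \<longlonglongrightarrow> w $ i"
proof -
  have "(\<lambda>k. v k $ i - w $ i) \<longlonglongrightarrow> 0"
  proof (rule null_cmp[OF _ assms(3)])
      fix k
      have "\<bar>(v k - w) $ i\<bar> \<le> enorm (v k - w)" by (rule coord_le_enorm) (use assms in simp)
      thus "\<bar>v k $ i - w $ i\<bar> \<le> enorm (v k - w)" using assms by simp
  qed
  thus ?thesis by (rule LIM_zero_cancel)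
qed

lemma banach:
  fixes f :: "real vec \<Rightarrow> real vec"
  assumes Y: "Y \<subseteq> carrier_vec n" and fS: "\<forall>x\<in>orth_compl n Y. f x \<in> orth_compl n Y"
    and fc: "\<forall>x\<in>orth_compl n Y. \<forall>y\<in>orth_compl n Y. enorm (f x - f y) \<le> \<rho> * enorm (x - y)"
    and r0: "0 \<le> \<rho>" and r1: "\<rho> < 1" and x0: "x0 \<in> orth_compl n Y"
  shows "\<exists>p\<in>orth_compl n Y. f p = p"
proof -
  define S where "S = orth_compl n Y"
  define xs where "xs k = (f ^^ k) x0" for k
  have xsS: "xs k \<in> S" for k unfolding xs_def S_def by (induction k) (use x0 fS in auto)
  have xsc: "xs k \<in> carrier_vec n" for k using xsS[of k] W_carrier unfolding S_def by auto
  define c where "c = enorm (xs 1 - xs 0)"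
  have dk: "enorm (xs (Suc k) - xs k) \<le> \<rho>^k * c" for k
  proof (induction k)
    case 0 thus ?case unfolding c_def by simp
  next
    case (Suc k)
    have "enorm (xs (Suc (Suc k)) - xs (Suc k)) = enorm (f (xs (Suc k)) - f (xs k))"
      unfolding xs_def by simp
    also have "\<dots> \<le> \<rho> * enorm (xs (Suc k) - xs k)" using fc xsS unfolding S_def by auto
    also have "\<dots> \<le> \<rho> * (\<rho>^k * c)" using Suc r0 by (simp add: mult_left_mono)
    finally show ?case by simp
  qed
  have conv: "convergent (\<lambda>k. xs k $ i)" if i: "i < n" for i
  proof -
    define a where "a k = xs k $ i" for k
    have sd: "summable (\<lambda>k. a (Suc k) - a k)"
    proof (rule summable_comparison_test)
      show "\<exists>N. \<forall>k\<ge>N. norm (a (Suc k) - a k) \<le> c * \<rho>^k"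
      proof (intro exI allI impI)
        fix k
        have "\<bar>(xs (Suc k) - xs k) $ i\<bar> \<le> enorm (xs (Suc k) - xs k)"
          by (rule coord_le_enorm) (use xsc[of k] xsc[of "Suc k"] i in simp)
        moreover have "(xs (Suc k) - xs k) $ i = xs (Suc k) $ i - xs k $ i"
          using xsc[of k] xsc[of "Suc k"] i by simp
        ultimately show "norm (a (Suc k) - a k) \<le> c * \<rho>^k" using dk[of k] unfolding a_def
          by (simp add: mult.commute)
      qed
      show "summable (\<lambda>k. c * \<rho>^k)" using r0 r1 by (intro summable_mult summable_geometric) simp
    qed
    have "(\<lambda>k. \<Sum>j<k. a (Suc j) - a j) \<longlonglongrightarrow> suminf (\<lambda>k. a (Suc k) - a k)"
      using summable_LIMSEQ[OF sd] .
    hence "(\<lambda>k. a 0 + (\<Sum>j<k. a (Suc j) - a j)) \<longlonglongrightarrow> a 0 + suminf (\<lambda>k. a (Suc k) - a k)"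
      by (intro tendsto_add tendsto_const)
    hence "a \<longlonglongrightarrow> a 0 + suminf (\<lambda>k. a (Suc k) - a k)"
      by (simp add: sum_lessThan_telescope)
    thus ?thesis unfolding a_def convergent_def by blast
  qed
  define L where "L = vec n (\<lambda>i. lim (\<lambda>k. xs k $ i))"
  have Lc: "L \<in> carrier_vec n" unfolding L_def by simp
  have limi: "(\<lambda>k. xs k $ i) \<longlonglongrightarrow> L $ i" if "i < n" for i
    using conv[OF that] that unfolding L_def by (simp add: convergent_LIMSEQ_iff)
  have en: "(\<lambda>k. enorm (xs k - L)) \<longlonglongrightarrow> 0"
  proof -
    have "(\<lambda>k. \<Sum>i<n. (xs k $ i - L $ i) * (xs k $ i - L $ i)) \<longlonglongrightarrow> (\<Sum>i<n. (L $ i - L $ i) * (L $ i - L $ i))"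
      by (intro tendsto_sum tendsto_mult tendsto_diff limi tendsto_const) auto
    hence "(\<lambda>k. (xs k - L) \<bullet> (xs k - L)) \<longlonglongrightarrow> 0"
      using xsc Lc by (simp add: dot_expand[of _ n])
    hence "(\<lambda>k. sqrt ((xs k - L) \<bullet> (xs k - L))) \<longlonglongrightarrow> sqrt 0" by (rule tendsto_real_sqrt)
    thus ?thesis unfolding enorm_def by simp
  qed
  have LS: "L \<in> S"
  proof -
    { fix y assume y: "y \<in> Y"
      have yc: "y \<in> carrier_vec n" using y Y by auto
      have "(\<lambda>k. \<Sum>i<n. xs k $ i * y $ i) \<longlonglongrightarrow> (\<Sum>i<n. L $ i * y $ i)"
        by (intro tendsto_sum tendsto_mult limi tendsto_const) auto
      moreover have "(\<Sum>i<n. xs k $ i * y $ i) = 0" for k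
        using xsS[of k] y dot_expand[OF xsc yc] unfolding S_def orth_compl_def by auto
      ultimately have "(\<lambda>k. 0::real) \<longlonglongrightarrow> L \<bullet> y" using dot_expand[OF Lc yc] by simp
      hence "L \<bullet> y = 0" using LIMSEQ_unique tendsto_const by blast }
    thus ?thesis unfolding S_def orth_compl_def using Lc by auto
  qed
  have fLc: "f L \<in> carrier_vec n" using fS LS W_carrier unfolding S_def by auto
  have en2: "(\<lambda>k. enorm (xs (Suc k) - f L)) \<longlonglongrightarrow> 0"
  proof (rule null_cmp)
      fix k
      have "enorm (xs (Suc k) - f L) = enorm (f (xs k) - f L)" unfolding xs_def by simp
      also have "\<dots> \<le> \<rho> * enorm (xs k - L)" using fc xsS LS unfolding S_def by auto
      finally show "\<bar>enorm (xs (Suc k) - f L)\<bar> \<le> \<rho> * enorm (xs k - L)" using enorm_ge0 by simp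
    show "(\<lambda>k. \<rho> * enorm (xs k - L)) \<longlonglongrightarrow> 0" using tendsto_mult_right_zero[OF en] .
  qed
  have "f L = L"
  proof (rule eq_vecI)
    fix i assume "i < dim_vec L"
    hence i: "i < n" using Lc by simp
    have a: "(\<lambda>k. xs (Suc k) $ i) \<longlonglongrightarrow> f L $ i" by (rule coord_tendsto[OF xsc fLc en2 i])
    have b: "(\<lambda>k. xs (Suc k) $ i) \<longlonglongrightarrow> L $ i" using limi[OF i] by (rule LIMSEQ_Suc)
    show "f L $ i = L $ i" using LIMSEQ_unique[OF a b] .
  qed (use fLc Lc in simp)
  thus ?thesis using LS unfolding S_def by blast
qed

theorem proposition1:
  fixes K :: nat and B :: "real mat" and \<gamma> :: "real vec" and \<tau> \<rho> :: real
    and D :: "real vec \<Rightarrow> real vec"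
  defines "At \<equiv> lifted_shear_op K"
  defines "V \<equiv> orth_compl (K*K) (mat_kernel (B * At))"
  defines "Fwd \<equiv> (\<lambda>\<kappa>. \<kappa> + \<tau> \<cdot>\<^sub>v (B *\<^sub>v (\<gamma> - At *\<^sub>v \<kappa>)))"
  defines "T \<equiv> (\<lambda>\<kappa>. D (Fwd \<kappa>))"
  defines "lmin \<equiv> Min {l. eigenvalue (B * At) l \<and> l \<noteq> 0}"
  defines "lmax \<equiv> Max {l. eigenvalue (B * At) l \<and> l \<noteq> 0}"
  assumes K2: "K \<ge> 2"
    and Bdim: "B \<in> carrier_mat (K*K) (2*(K*K))"
    and \<gamma>dim: "\<gamma> \<in> carrier_vec (2*(K*K))"
    and \<tau>pos: "\<tau> > 0"
    and D_V: "\<forall>x\<in>V. D x \<in> V"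
    and D_nonexp: "\<exists>\<beta>\<le>1. \<forall>x\<in>V. \<forall>y\<in>V. enorm (D x - D y) \<le> \<beta> * enorm (x - y)"
    and BA_sym: "transpose_mat (B * At) = B * At"
    and BA_psd: "\<forall>x\<in>carrier_vec (K*K). x \<bullet> ((B * At) *\<^sub>v x) \<ge> 0"
    and BA_nz: "B * At \<noteq> 0\<^sub>m (K*K) (K*K)"
    and imB: "\<forall>y\<in>carrier_vec (2*(K*K)). B *\<^sub>v y \<in> V"
    and \<rho>_ge: "(lmax - lmin) / (lmax + lmin) \<le> \<rho>"
    and \<rho>_lt: "\<rho> < 1"
    and \<tau>_lo: "(1 - \<rho>) / lmin \<le> \<tau>"
    and \<tau>_hi: "\<tau> \<le> (1 + \<rho>) / lmax"
  shows "\<exists>\<kappa>h\<in>V. T \<kappa>h = \<kappa>h \<and> (\<forall>\<kappa>'\<in>V. T \<kappa>' = \<kappa>' \<longrightarrow> \<kappa>' = \<kappa>h) \<and>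
           (\<forall>\<kappa>0\<in>V. \<forall>k::nat. enorm ((T ^^ k) \<kappa>0 - \<kappa>h) \<le> \<rho> ^ k * enorm (\<kappa>0 - \<kappa>h))"
proof -
  define n where "n = K*K"
  define M where "M = B * At"
  define Y where "Y = mat_kernel M"
  have Atc: "At \<in> carrier_mat (2*n) n" unfolding At_def lifted_shear_op_def n_def by simp
  have Bc: "B \<in> carrier_mat n (2*n)" using Bdim unfolding n_def .
  have Mc: "M \<in> carrier_mat n n" unfolding M_def using Atc Bc by auto
  have Y: "Y \<subseteq> carrier_vec n" unfolding Y_def mat_kernel_def using Mc by auto
  have Vdef: "V = orth_compl n Y" unfolding V_def Y_def M_def n_def ..
  have Msym: "transpose_mat M = M" using BA_sym unfolding M_def .
  have MV: "M *\<^sub>v z \<in> V" if z: "z \<in> carrier_vec n" for z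
  proof -
    { fix k assume k: "k \<in> Y"
      have kc: "k \<in> carrier_vec n" using k Y by auto
      have "(M *\<^sub>v z) \<bullet> k = z \<bullet> (M *\<^sub>v k)" by (rule sym_dot[OF Mc Msym z kc])
      also have "M *\<^sub>v k = 0\<^sub>v n" using k Mc unfolding Y_def mat_kernel_def by auto
      finally have "(M *\<^sub>v z) \<bullet> k = 0" using z by simp }
    thus ?thesis unfolding Vdef orth_compl_def using Mc z by auto
  qed
  define Cm where "Cm = 1\<^sub>m n - \<tau> \<cdot>\<^sub>m M"
  have Cmc: "Cm \<in> carrier_mat n n" unfolding Cm_def using Mc by auto
  have Cmsym: "transpose_mat Cm = Cm"
  proof (rule eq_matI)
    fix i j assume "i < dim_row Cm" "j < dim_col Cm"
    hence ij: "i < n" "j < n" using Cmc by auto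
    have "M $$ (j, i) = M $$ (i, j)" using arg_cong[OF Msym, of "\<lambda>A. A $$ (i,j)"] ij Mc by simp
    thus "transpose_mat Cm $$ (i, j) = Cm $$ (i, j)" unfolding Cm_def using ij Mc by simp
  qed (use Cmc in auto)
  have Cmv: "Cm *\<^sub>v z = z - \<tau> \<cdot>\<^sub>v (M *\<^sub>v z)" if z: "z \<in> carrier_vec n" for z
  proof -
    have "Cm *\<^sub>v z = 1\<^sub>m n *\<^sub>v z - (\<tau> \<cdot>\<^sub>m M) *\<^sub>v z" unfolding Cm_def
      by (rule minus_mult_distrib_mat_vec) (use Mc z in auto)
    also have "(\<tau> \<cdot>\<^sub>m M) *\<^sub>v z = \<tau> \<cdot>\<^sub>v (M *\<^sub>v z)"
      by (intro eq_vecI) (use Mc z in \<open>auto simp: scalar_prod_def sum_distrib_left algebra_simps\<close>)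
    finally show ?thesis using z by simp
  qed
  have VC: "\<forall>z\<in>V. Cm *\<^sub>v z \<in> V"
  proof
    fix z assume z: "z \<in> V"
    have zc: "z \<in> carrier_vec n" using z W_carrier unfolding Vdef by auto
    show "Cm *\<^sub>v z \<in> V" unfolding Cmv[OF zc] Vdef
      by (rule W_minus[OF Y z[unfolded Vdef] W_smult[OF Y MV[OF zc, unfolded Vdef]]])
  qed
  obtain i j where ij: "i < n" "j < n" "M $$ (i,j) \<noteq> 0"
  proof -
    have "\<not> (\<forall>i<n. \<forall>j<n. M $$ (i,j) = 0)"
    proof
      assume "\<forall>i<n. \<forall>j<n. M $$ (i,j) = 0"
      hence "M = 0\<^sub>m n n" by (intro eq_matI) (use Mc in auto)
      thus False using BA_nz unfolding M_def n_def by simp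
    qed
    thus ?thesis using that by blast
  qed
  define e where "e = M *\<^sub>v unit_vec n j"
  have eV: "e \<in> V" unfolding e_def by (rule MV) simp
  have "e $ i = M $$ (i,j)" unfolding e_def using ij Mc by simp
  hence e0: "e \<noteq> 0\<^sub>v n" using ij by auto
  from core[OF Cmc Cmsym Y VC[unfolded Vdef] eV[unfolded Vdef] e0]
  obtain \<sigma> y where y: "y \<in> V" "y \<noteq> 0\<^sub>v n" "Cm *\<^sub>v y = \<sigma> \<cdot>\<^sub>v y"
    and bnd: "\<forall>z\<in>V. (Cm *\<^sub>v z) \<bullet> (Cm *\<^sub>v z) \<le> \<sigma>^2 * (z \<bullet> z)"
    unfolding Vdef by blast
  have yc: "y \<in> carrier_vec n" using y W_carrier unfolding Vdef by auto
  define lam where "lam = (1 - \<sigma>) / \<tau>"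
  have My: "M *\<^sub>v y = lam \<cdot>\<^sub>v y"
  proof (rule eq_vecI)
    fix i assume "i < dim_vec (lam \<cdot>\<^sub>v y)"
    hence i: "i < n" using yc by simp
    have "(Cm *\<^sub>v y) $ i = (\<sigma> \<cdot>\<^sub>v y) $ i" using y(3) by simp
    hence "y $ i - \<tau> * (M *\<^sub>v y) $ i = \<sigma> * y $ i" unfolding Cmv[OF yc] using i yc Mc by simp
    thus "(M *\<^sub>v y) $ i = (lam \<cdot>\<^sub>v y) $ i" unfolding lam_def using i yc \<tau>pos
      by (simp add: field_simps)
  qed (use Mc yc in simp)
  have lam0: "lam \<noteq> 0"
  proof
    assume "lam = 0"
    hence "M *\<^sub>v y = 0\<^sub>v n" using My yc by auto
    hence "y \<in> Y" unfolding Y_def mat_kernel_def using yc Mc by auto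
    hence "y \<bullet> y = 0" using y(1) unfolding Vdef orth_compl_def by auto
    thus False using dot_self_eq0[OF yc] y(2) by simp
  qed
  define Lam where "Lam = {l. eigenvalue (B * At) l \<and> l \<noteq> 0}"
  have ev_pos: "l > 0" if l: "l \<in> Lam" for l
  proof -
    obtain v where v: "eigenvector M v l" using l unfolding Lam_def eigenvalue_def M_def by auto
    hence vc: "v \<in> carrier_vec n" and v0: "v \<noteq> 0\<^sub>v n" and Mv: "M *\<^sub>v v = l \<cdot>\<^sub>v v"
      unfolding eigenvector_def using Mc by auto
    have "0 \<le> v \<bullet> (M *\<^sub>v v)" using BA_psd vc unfolding M_def n_def by auto
    also have "v \<bullet> (M *\<^sub>v v) = l * (v \<bullet> v)" unfolding Mv using vc by simp
    finally have a: "0 \<le> l * (v \<bullet> v)" .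
    have "v \<bullet> v > 0" using dot_self_ge0[of v] dot_self_eq0[OF vc] v0 by fastforce
    hence "l \<ge> 0" using a by (simp add: zero_le_mult_iff)
    thus ?thesis using l unfolding Lam_def by auto
  qed
  have lamL: "lam \<in> Lam" unfolding Lam_def eigenvalue_def eigenvector_def
    using yc y(2) My lam0 Mc carrier_matD(1)[OF Bc] unfolding M_def by (intro CollectI conjI exI[of _ y]) auto
  have finL: "finite Lam"
  proof -
    have "Lam \<subseteq> spectrum M" unfolding Lam_def spectrum_def M_def by auto
    thus ?thesis using card_finite_spectrum(1)[OF Mc] finite_subset by auto
  qed
  have lminL: "lmin \<in> Lam" unfolding lmin_def Lam_def[symmetric] using finL lamL Min_in by blast
  have lmaxL: "lmax \<in> Lam" unfolding lmax_def Lam_def[symmetric] using finL lamL Max_in by blast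
  have "lmin \<le> lam" unfolding lmin_def Lam_def[symmetric] using finL lamL by simp
  have "lam \<le> lmax" unfolding lmax_def Lam_def[symmetric] using finL lamL by simp
  have lminp: "lmin > 0" using ev_pos[OF lminL] .
  have lmaxp: "lmax > 0" using ev_pos[OF lmaxL] .
  have sig: "\<sigma> = 1 - \<tau> * lam" unfolding lam_def using \<tau>pos by simp
  have "1 - \<rho> \<le> \<tau> * lmin" using \<tau>_lo lminp by (simp add: divide_le_eq mult.commute)
  also have "\<dots> \<le> \<tau> * lam" using \<open>lmin \<le> lam\<close> \<tau>pos by simp
  finally have s1: "\<sigma> \<le> \<rho>" using sig by simp
  have "\<tau> * lam \<le> \<tau> * lmax" using \<open>lam \<le> lmax\<close> \<tau>pos by simp
  also have "\<dots> \<le> 1 + \<rho>" using \<tau>_hi lmaxp by (simp add: le_divide_eq mult.commute)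
  finally have s2: "- \<rho> \<le> \<sigma>" using sig by simp
  have rho0: "0 \<le> \<rho>" using s1 s2 by simp
  have sig2: "\<sigma>^2 \<le> \<rho>^2" using s1 s2 by (simp add: abs_le_square_iff[symmetric] abs_le_iff)
  have Ccontr: "enorm (Cm *\<^sub>v z) \<le> \<rho> * enorm z" if z: "z \<in> V" for z
  proof -
    have "(Cm *\<^sub>v z) \<bullet> (Cm *\<^sub>v z) \<le> \<sigma>^2 * (z \<bullet> z)" using bnd z by auto
    also have "\<dots> \<le> \<rho>^2 * (z \<bullet> z)" using sig2 dot_self_ge0[of z] by (simp add: mult_right_mono)
    finally have "sqrt ((Cm *\<^sub>v z) \<bullet> (Cm *\<^sub>v z)) \<le> sqrt (\<rho>^2 * (z \<bullet> z))" by (rule real_sqrt_le_mono)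
    thus ?thesis unfolding enorm_def using rho0 by (simp add: real_sqrt_mult)
  qed
  define g where "g = B *\<^sub>v \<gamma>"
  have gV: "g \<in> V" unfolding g_def using imB \<gamma>dim by auto
  have Fwd_eq: "Fwd \<kappa> = \<kappa> + \<tau> \<cdot>\<^sub>v (g - M *\<^sub>v \<kappa>)" if k: "\<kappa> \<in> carrier_vec n" for \<kappa>
  proof -
    have "B *\<^sub>v (\<gamma> - At *\<^sub>v \<kappa>) = B *\<^sub>v \<gamma> - B *\<^sub>v (At *\<^sub>v \<kappa>)"
      by (rule mult_minus_distrib_mat_vec[OF Bc]) (use \<gamma>dim Atc k in \<open>auto simp: n_def\<close>)
    also have "B *\<^sub>v (At *\<^sub>v \<kappa>) = M *\<^sub>v \<kappa>" unfolding M_def using Bc Atc k by simp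
    finally show ?thesis unfolding Fwd_def g_def by simp
  qed
  have FV: "Fwd \<kappa> \<in> V" if k: "\<kappa> \<in> V" for \<kappa>
  proof -
    have kc: "\<kappa> \<in> carrier_vec n" using k W_carrier unfolding Vdef by auto
    show ?thesis unfolding Fwd_eq[OF kc] Vdef
      by (rule W_add[OF Y k[unfolded Vdef] W_smult[OF Y W_minus[OF Y gV[unfolded Vdef] MV[OF kc, unfolded Vdef]]]])
  qed
  have Fdiff: "Fwd a - Fwd b = Cm *\<^sub>v (a - b)" if a: "a \<in> carrier_vec n" and b: "b \<in> carrier_vec n" for a b
  proof -
    have abc: "a - b \<in> carrier_vec n" using a b by simp
    have gc: "g \<in> carrier_vec n" using gV W_carrier unfolding Vdef by auto
    have Mab: "M *\<^sub>v (a - b) = M *\<^sub>v a - M *\<^sub>v b" by (rule mult_minus_distrib_mat_vec[OF Mc a b])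
    show ?thesis unfolding Fwd_eq[OF a] Fwd_eq[OF b] Cmv[OF abc] Mab
      by (intro eq_vecI) (use a b gc Mc in \<open>auto simp: algebra_simps\<close>)
  qed
  have TV: "\<forall>x\<in>V. T x \<in> V" unfolding T_def using FV D_V by auto
  obtain \<beta> where \<beta>: "\<beta> \<le> 1" "\<forall>x\<in>V. \<forall>y\<in>V. enorm (D x - D y) \<le> \<beta> * enorm (x - y)"
    using D_nonexp by auto
  have Tc: "\<forall>a\<in>V. \<forall>b\<in>V. enorm (T a - T b) \<le> \<rho> * enorm (a - b)"
  proof (intro ballI)
    fix a b assume a: "a \<in> V" and b: "b \<in> V"
    have ac: "a \<in> carrier_vec n" and bc: "b \<in> carrier_vec n" using a b W_carrier unfolding Vdef by auto
    have "enorm (T a - T b) \<le> \<beta> * enorm (Fwd a - Fwd b)" unfolding T_def using \<beta>(2) FV a b by auto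
    also have "\<dots> \<le> enorm (Fwd a - Fwd b)" using mult_right_mono[OF \<beta>(1) enorm_ge0[of "Fwd a - Fwd b"]]
      by simp
    also have "\<dots> = enorm (Cm *\<^sub>v (a - b))" using Fdiff[OF ac bc] by simp
    also have "\<dots> \<le> \<rho> * enorm (a - b)"
      by (rule Ccontr) (use W_minus[OF Y a[unfolded Vdef] b[unfolded Vdef]] Vdef in simp)
    finally show "enorm (T a - T b) \<le> \<rho> * enorm (a - b)" .
  qed
  obtain p where p: "p \<in> V" "T p = p"
    using banach[OF Y TV[unfolded Vdef] Tc[unfolded Vdef] rho0 \<rho>_lt eV[unfolded Vdef]] Vdef by blast
  have uniq: "\<forall>q\<in>V. T q = q \<longrightarrow> q = p"
  proof (intro ballI impI)
    fix q assume q: "q \<in> V" "T q = q"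
    have qc: "q \<in> carrier_vec n" and pc: "p \<in> carrier_vec n" using q p W_carrier unfolding Vdef by auto
    have "enorm (q - p) \<le> \<rho> * enorm (q - p)" using Tc q p by force
    hence "enorm (q - p) = 0" using \<rho>_lt enorm_ge0[of "q - p"]
      by (smt (verit) mult_le_cancel_right1)
    hence "(q - p) \<bullet> (q - p) = 0" unfolding enorm_def by simp
    hence "q - p = 0\<^sub>v n" using dot_self_eq0[of "q - p" n] qc pc by simp
    show "q = p"
    proof (rule eq_vecI)
      fix i assume "i < dim_vec p"
      hence i: "i < n" using pc by simp
      have "(q - p) $ i = 0" using \<open>q - p = 0\<^sub>v n\<close> i by simp
      thus "q $ i = p $ i" using i qc pc by simp
    qed (use qc pc in simp)
  qed
  have rate: "\<forall>\<kappa>0\<in>V. \<forall>k::nat. enorm ((T ^^ k) \<kappa>0 - p) \<le> \<rho> ^ k * enorm (\<kappa>0 - p)"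
  proof (intro ballI allI)
    fix \<kappa>0 k assume k0: "\<kappa>0 \<in> V"
    have inV: "(T ^^ m) \<kappa>0 \<in> V" for m by (induction m) (use k0 TV in auto)
    show "enorm ((T ^^ k) \<kappa>0 - p) \<le> \<rho> ^ k * enorm (\<kappa>0 - p)"
    proof (induction k)
      case 0 thus ?case by simp
    next
      case (Suc k)
      have "enorm ((T ^^ Suc k) \<kappa>0 - p) = enorm (T ((T ^^ k) \<kappa>0) - T p)" using p by simp
      also have "\<dots> \<le> \<rho> * enorm ((T ^^ k) \<kappa>0 - p)" using Tc inV p by blast
      also have "\<dots> \<le> \<rho> * (\<rho> ^ k * enorm (\<kappa>0 - p))" using Suc rho0 by (rule mult_left_mono)
      finally show ?case by simp
    qed
  qed
  show ?thesis using p uniq rate by blast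
qed

end
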